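(* Let $G$ be a finite simple graph with $G\in\mathcal{F}_3$. Then $crx_3(G)=3$ if and only if $G$ is isomorphic to $K_3$ or $K_4$.
   Context: An edge-coloured cycle is rainbow if all its edges have distinct colours. For $k\ge 1$, $\mathcal{F}_k$ is the family of graphs in which any $k$ vertices lie on a common cycle. For $G\in\mathcal{F}_k$, a $k$-rainbow cycle colouring of $G$ is an edge-colouring such that any $k$ vertices of $G$ lie on a common rainbow cycle; $crx_k(G)$ is the minimum number of colours in a $k$-rainbow cycle colouring of $G$. *)

theory Defs
  imports Main
begin

definition simple_graph :: "'a set \<Rightarrow> 'a set set \<Rightarrow> bool" where
  "simple_graph V E \<longleftrightarrow> finite V \<and> (\<forall>e\<in>E. e \<subseteq> V \<and> card e = 2)"

definition is_cycle :: "'a set \<Rightarrow> 'a set set \<Rightarrow> 'a list \<Rightarrow> bool" where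
  "is_cycle V E vs \<longleftrightarrow> length vs \<ge> 3 \<and> distinct vs \<and> set vs \<subseteq> V \<and>
     (\<forall>i < length vs. {vs ! i, vs ! ((i + 1) mod length vs)} \<in> E)"

definition cycle_edges :: "'a list \<Rightarrow> 'a set set" where
  "cycle_edges vs = {{vs ! i, vs ! ((i + 1) mod length vs)} | i. i < length vs}"

definition rainbow :: "('a set \<Rightarrow> 'c) \<Rightarrow> 'a list \<Rightarrow> bool" where
  "rainbow c vs \<longleftrightarrow> inj_on c (cycle_edges vs)"

definition in_F :: "nat \<Rightarrow> 'a set \<Rightarrow> 'a set set \<Rightarrow> bool" where
  "in_F k V E \<longleftrightarrow> (\<forall>S \<subseteq> V. card S = k \<longrightarrow> (\<exists>vs. is_cycle V E vs \<and> S \<subseteq> set vs))"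

definition rainbow_cycle_colouring ::
  "nat \<Rightarrow> 'a set \<Rightarrow> 'a set set \<Rightarrow> ('a set \<Rightarrow> nat) \<Rightarrow> bool" where
  "rainbow_cycle_colouring k V E c \<longleftrightarrow>
     (\<forall>S \<subseteq> V. card S = k \<longrightarrow> (\<exists>vs. is_cycle V E vs \<and> S \<subseteq> set vs \<and> rainbow c vs))"

definition crx :: "nat \<Rightarrow> 'a set \<Rightarrow> 'a set set \<Rightarrow> nat" where
  "crx k V E = (LEAST n. \<exists>c. rainbow_cycle_colouring k V E c \<and> card (c ` E) = n)"

definition complete_edges :: "nat \<Rightarrow> nat set set" where
  "complete_edges n = {{i, j} | i j. i < n \<and> j < n \<and> i \<noteq> j}"

definition graph_iso :: "'a set \<Rightarrow> 'a set set \<Rightarrow> 'b set \<Rightarrow> 'b set set \<Rightarrow> bool" where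
  "graph_iso V E V' E' \<longleftrightarrow>
     (\<exists>f. bij_betw f V V' \<and> (\<forall>u\<in>V. \<forall>v\<in>V. {u, v} \<in> E \<longleftrightarrow> {f u, f v} \<in> E'))"

end

theory Submission imports Defs begin

lemma mod_aux:
  fixes i j n :: nat
  assumes a: "i<n" "j<n" "3\<le>n" "i = (j+1) mod n" "j = (i+1) mod n" shows False
proof (cases "j+1<n")
  case True
  then have i: "i = j+1" using a(4) by simp
  show False
  proof (cases "j+2<n")
    case True then have "(i+1) mod n = j+2" using i by simp
    then show False using a(5) by simp
  next
    case False then have "j+2 = n" using i a(1) by simp
    then have "(i+1) mod n = 0" using i by simp
    then show False using a(5) a(3) \<open>j+2=n\<close> by simp
  qed
next
  case False
  then have jn: "j+1 = n" using a(2) by simp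
  then have "i = 0" using a(4) by simp
  then have "j = 1" using a(5) a(3) by simp
  then show False using jn a(3) by simp
qed

lemma cycle_edges_image:
  "cycle_edges vs = (\<lambda>i. {vs!i, vs!((i+1) mod length vs)}) ` {..<length vs}"
  by (auto simp: cycle_edges_def)

lemma cycle_sub: "is_cycle V E vs \<Longrightarrow> cycle_edges vs \<subseteq> E"
  by (auto simp: cycle_edges_def is_cycle_def)

lemma cycle_card:
  assumes "is_cycle V E vs" shows "card (cycle_edges vs) = length vs"
proof -
  define n where "n = length vs"
  have n3: "3 \<le> n" and d: "distinct vs" using assms by (auto simp: is_cycle_def n_def)
  have "inj_on (\<lambda>i. {vs!i, vs!((i+1) mod n)}) {..<n}"
  proof (rule inj_onI)
    fix i j assume i: "i \<in> {..<n}" and j: "j \<in> {..<n}"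
      and eq: "{vs!i, vs!((i+1) mod n)} = {vs!j, vs!((j+1) mod n)}"
    have ij1: "(i+1) mod n < n" "(j+1) mod n < n" using n3 by auto
    from eq consider "vs!i = vs!j" | "vs!i = vs!((j+1) mod n) \<and> vs!((i+1) mod n) = vs!j"
      unfolding doubleton_eq_iff by blast
    then show "i = j"
    proof cases
      case 1
      have "i < length vs" "j < length vs" using i j by (auto simp: n_def)
      then show ?thesis using 1 nth_eq_iff_index_eq[OF d] by blast
    next
      case 2
      have iA: "i < length vs" "j < length vs" "(i+1) mod n < length vs" "(j+1) mod n < length vs"
        using i j ij1 by (auto simp: n_def)
      have "i = (j+1) mod n" using 2 nth_eq_iff_index_eq[OF d iA(1) iA(4)] by simp
      moreover have "(i+1) mod n = j" using 2 nth_eq_iff_index_eq[OF d iA(3) iA(2)] by simp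
      ultimately have e2: "i = (j+1) mod n" "j = (i+1) mod n" by auto
      have "i < n" "j < n" using i j by auto
      from mod_aux[OF this n3 e2] show ?thesis ..
    qed
  qed
  then show ?thesis by (simp add: cycle_edges_image card_image n_def)
qed

lemma len3: "length vs = 3 \<Longrightarrow> \<exists>a b d. vs = [a,b,d]"
  by (cases vs; cases "tl vs"; cases "tl (tl vs)"; simp)

lemma ce3: "cycle_edges [a,b,d] = {{a,b},{b,d},{d,a}}"
proof -
  have l: "{..<length [a,b,d]} = {0,1,2}" by auto
  show ?thesis unfolding cycle_edges_image l by simp
qed

lemma pair_mem: "p\<in>{a,b,d} \<Longrightarrow> q\<in>{a,b,d} \<Longrightarrow> p\<noteq>q \<Longrightarrow> {p,q} \<in> {{a,b},{b,d},{d,a}}"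
  unfolding insert_iff empty_iff by (elim disjE) (simp_all add: insert_commute)

lemma tri_props:
  assumes "is_cycle V E [a,b,d]" "rainbow col [a,b,d]"
  shows "\<forall>p\<in>{a,b,d}. \<forall>q\<in>{a,b,d}. p\<noteq>q \<longrightarrow> {p,q}\<in>E"
    and "\<forall>p\<in>{a,b,d}. \<forall>q\<in>{a,b,d}. \<forall>r\<in>{a,b,d}. p\<noteq>q \<longrightarrow> p\<noteq>r \<longrightarrow> q\<noteq>r \<longrightarrow> col{p,q}\<noteq>col{p,r}"
proof -
  have sub: "{{a,b},{b,d},{d,a}} \<subseteq> E"
    using cycle_sub[OF assms(1)] unfolding ce3 .
  show "\<forall>p\<in>{a,b,d}. \<forall>q\<in>{a,b,d}. p\<noteq>q \<longrightarrow> {p,q}\<in>E"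
  proof (intro ballI impI)
    fix p q assume h: "p\<in>{a,b,d}" "q\<in>{a,b,d}" "p\<noteq>q"
    show "{p,q}\<in>E" using subsetD[OF sub pair_mem[OF h]] .
  qed
  have inj: "inj_on col {{a,b},{b,d},{d,a}}" using assms(2) by (simp add: rainbow_def ce3)
  show "\<forall>p\<in>{a,b,d}. \<forall>q\<in>{a,b,d}. \<forall>r\<in>{a,b,d}. p\<noteq>q \<longrightarrow> p\<noteq>r \<longrightarrow> q\<noteq>r \<longrightarrow> col{p,q}\<noteq>col{p,r}"
  proof (intro ballI impI)
    fix p q r assume h: "p\<in>{a,b,d}" "q\<in>{a,b,d}" "r\<in>{a,b,d}" "p\<noteq>q" "p\<noteq>r" "q\<noteq>r"
    have ne: "{p,q} \<noteq> {p,r}"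
    proof
      assume "{p,q} = {p,r}"
      then have "r \<in> {p,q}" by blast
      then show False using h(5,6) by blast
    qed
    show "col{p,q}\<noteq>col{p,r}"
    proof
      assume "col{p,q} = col{p,r}"
      from inj_onD[OF inj this pair_mem[OF h(1,2,4)] pair_mem[OF h(1,3,5)]] ne show False by blast
    qed
  qed
qed

definition col0 :: "nat set \<Rightarrow> nat" where
  "col0 e = (if e={0,1} \<or> e={2,3} then 0 else if e={0,2} \<or> e={1,3} then 1 else 2)"

lemma col0_range: "col0 e \<le> 2" by (simp add: col0_def)

lemma col0_prop:
  assumes "a<4" "b<4" "d<(4::nat)" "a\<noteq>b" "a\<noteq>d" "b\<noteq>d"
  shows "col0 {a,b} \<noteq> col0 {a,d}"
proof -
  have "a\<in>{0,1,2,3}" "b\<in>{0,1,2,3}" "d\<in>{0,1,2,3}" using assms by auto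
  then show ?thesis using assms(4-6) unfolding col0_def 
    by (elim insertE emptyE; simp add: doubleton_eq_iff)
qed


lemma inj3: "f A \<noteq> f B \<Longrightarrow> f A \<noteq> f C \<Longrightarrow> f B \<noteq> f C \<Longrightarrow> inj_on f {A,B,C}"
  unfolding inj_on_def by auto

lemma tri_colour:
  assumes comp: "\<forall>u\<in>V. \<forall>v\<in>V. u\<noteq>v \<longrightarrow> {u,v}\<in>E"
    and pr: "\<forall>u\<in>V. \<forall>v\<in>V. \<forall>w\<in>V. u\<noteq>v \<longrightarrow> u\<noteq>w \<longrightarrow> v\<noteq>w \<longrightarrow> col{u,v}\<noteq>col{u,w}"
  shows "rainbow_cycle_colouring 3 V E col"
  unfolding rainbow_cycle_colouring_def
proof (intro allI impI)
  fix S assume S0: "S \<subseteq> V" "card S = 3"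
  from S0(2) obtain x y z where xyz: "S = {x,y,z}" "x\<noteq>y" "y\<noteq>z" "x\<noteq>z"
    unfolding card_3_iff by blast
  have V: "x\<in>V" "y\<in>V" "z\<in>V" using S0(1) xyz(1) by blast+
  have e: "{x,y}\<in>E" "{y,z}\<in>E" "{z,x}\<in>E"
    using comp[rule_format, OF V(1) V(2) xyz(2)] comp[rule_format, OF V(2) V(3) xyz(3)]
      comp[rule_format, OF V(3) V(1)] xyz(4) by auto
  have cyc: "is_cycle V E [x,y,z]"
    unfolding is_cycle_def
  proof (intro conjI allI impI)
    fix i assume "i < length [x,y,z]"
    then have "i = 0 \<or> i = 1 \<or> i = 2" by auto
    then show "{[x,y,z] ! i, [x,y,z] ! ((i + 1) mod length [x,y,z])} \<in> E"
      using e by (elim disjE) simp_all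
  next
    show "distinct [x,y,z]" using xyz(2-4) by simp
  next
    show "set [x,y,z] \<subseteq> V" using V by simp
  qed simp
  have c1: "col{y,x}\<noteq>col{y,z}" using pr[rule_format, OF V(2) V(1) V(3)] xyz(2-4) by auto
  have c2: "col{x,y}\<noteq>col{x,z}" using pr[rule_format, OF V(1) V(2) V(3)] xyz(2-4) by auto
  have c3: "col{z,y}\<noteq>col{z,x}" using pr[rule_format, OF V(3) V(2) V(1)] xyz(2-4) by auto
  have "inj_on col {{x,y},{y,z},{z,x}}"
  proof (rule inj3)
    show "col{x,y}\<noteq>col{y,z}" using c1 by (simp add: insert_commute)
    show "col{x,y}\<noteq>col{z,x}" using c2 by (simp add: insert_commute)
    show "col{y,z}\<noteq>col{z,x}" using c3 by (simp add: insert_commute)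
  qed
  then have r: "rainbow col [x,y,z]" unfolding rainbow_def ce3 .
  show "\<exists>vs. is_cycle V E vs \<and> S \<subseteq> set vs \<and> rainbow col vs"
    using cyc r xyz(1) by (intro exI[of _ "[x,y,z]"]) simp
qed

lemma lower:
  assumes "rainbow_cycle_colouring 3 V E col" "finite E" "finite V" "3 \<le> card V"
  shows "3 \<le> card (col ` E)"
proof -
  obtain S where S: "S \<subseteq> V" "card S = 3" using obtain_subset_with_card_n[OF assms(4)] by blast
  then obtain vs where vs: "is_cycle V E vs" "rainbow col vs"
    using assms(1) unfolding rainbow_cycle_colouring_def by blast
  have "3 \<le> card (cycle_edges vs)" using cycle_card[OF vs(1)] vs(1) by (simp add: is_cycle_def)
  also have "\<dots> = card (col ` cycle_edges vs)"
    using vs(2) by (simp add: rainbow_def card_image)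
  also have "\<dots> \<le> card (col ` E)"
    using cycle_sub[OF vs(1)] assms(2) by (intro card_mono) auto
  finally show ?thesis .
qed

lemma iso_complete:
  assumes "simple_graph V E" "\<forall>u\<in>V. \<forall>v\<in>V. u\<noteq>v \<longrightarrow> {u,v}\<in>E" "card V = n"
  shows "graph_iso V E {0..<n} (complete_edges n)"
proof -
  have fin: "finite V" using assms(1) by (simp add: simple_graph_def)
  obtain f where f: "bij_betw f V {0..<n}" using ex_bij_betw_finite_nat[OF fin] assms(3) by blast
  have "\<forall>u\<in>V. \<forall>v\<in>V. {u, v} \<in> E \<longleftrightarrow> {f u, f v} \<in> complete_edges n"
  proof (intro ballI)
    fix u v assume u: "u\<in>V" and v: "v\<in>V"
    have fu: "f u < n" "f v < n" using f u v by (auto simp: bij_betw_def)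
    have "{u,v}\<in>E \<longleftrightarrow> u \<noteq> v"
    proof
      assume "{u,v}\<in>E" then have "card {u,v} = 2" using assms(1) by (simp add: simple_graph_def)
      show "u\<noteq>v"
      proof
        assume "u = v" then have "card {u,v} = 1" by simp
        with \<open>card {u,v} = 2\<close> show False by simp
      qed
    qed (use assms(2) u v in auto)
    also have "\<dots> \<longleftrightarrow> f u \<noteq> f v" using f u v by (auto simp: bij_betw_def inj_on_def)
    also have "\<dots> \<longleftrightarrow> {f u, f v} \<in> complete_edges n"
      using fu by (auto simp: complete_edges_def doubleton_eq_iff)
    finally show "{u, v} \<in> E \<longleftrightarrow> {f u, f v} \<in> complete_edges n" .
  qed
  then show ?thesis using f unfolding graph_iso_def by blast
qed

lemma iso_inv:
  assumes "graph_iso V E {0..<n} (complete_edges n)"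
  shows "card V = n" "\<forall>u\<in>V. \<forall>v\<in>V. u\<noteq>v \<longrightarrow> {u,v}\<in>E"
proof -
  obtain f where f: "bij_betw f V {0..<n}"
    and e: "\<forall>u\<in>V. \<forall>v\<in>V. {u, v} \<in> E \<longleftrightarrow> {f u, f v} \<in> complete_edges n"
    using assms unfolding graph_iso_def by blast
  show "card V = n" using bij_betw_same_card[OF f] by simp
  show "\<forall>u\<in>V. \<forall>v\<in>V. u\<noteq>v \<longrightarrow> {u,v}\<in>E"
  proof (intro ballI impI)
    fix u v assume u: "u\<in>V" and v: "v\<in>V" and uv: "u\<noteq>v"
    have "f u < n" "f v < n" "f u \<noteq> f v" using f u v uv by (auto simp: bij_betw_def inj_on_def)
    then have "{f u, f v} \<in> complete_edges n" by (auto simp: complete_edges_def)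
    then show "{u,v}\<in>E" using e u v by blast
  qed
qed


theorem theorem6:
  fixes V :: "'a set" and E :: "'a set set"
  assumes "simple_graph V E"
    and "in_F 3 V E"
  shows "crx 3 V E = 3 \<longleftrightarrow>
           graph_iso V E {0..<3} (complete_edges 3) \<or> graph_iso V E {0..<4} (complete_edges 4)"
proof -
  have fin: "finite V" using assms(1) by (simp add: simple_graph_def)
  have "E \<subseteq> Pow V" using assms(1) by (auto simp: simple_graph_def)
  then have finE: "finite E" using fin by (meson finite_Pow_iff finite_subset)
  obtain h :: "'a set \<Rightarrow> nat" where h: "inj_on h E" using finite_imp_inj_to_nat_seg[OF finE] by blast
  have hc: "rainbow_cycle_colouring 3 V E h"
    unfolding rainbow_cycle_colouring_def
  proof (intro allI impI)
    fix S assume "S \<subseteq> V" "card S = 3"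
    then obtain vs where vs: "is_cycle V E vs" "S \<subseteq> set vs" using assms(2) unfolding in_F_def by blast
    have "rainbow h vs" unfolding rainbow_def using inj_on_subset[OF h cycle_sub[OF vs(1)]] .
    then show "\<exists>vs. is_cycle V E vs \<and> S \<subseteq> set vs \<and> rainbow h vs" using vs by blast
  qed
  let ?P = "\<lambda>n. \<exists>c. rainbow_cycle_colouring 3 V E c \<and> card (c ` E) = n"
  have exP: "?P (card (h ` E))" using hc by blast
  show ?thesis
  proof
    assume crx: "crx 3 V E = 3"
    have "?P (crx 3 V E)" unfolding crx_def using LeastI_ex[of ?P] exP by blast
    then obtain c where c: "rainbow_cycle_colouring 3 V E c" "card (c ` E) = 3" using crx by auto
    have V3: "3 \<le> card V"
    proof (rule ccontr)
      assume "\<not> 3 \<le> card V"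
      then have "rainbow_cycle_colouring 3 V E (\<lambda>_. 0)"
        unfolding rainbow_cycle_colouring_def
      proof (intro allI impI)
        fix S assume "\<not> 3 \<le> card V" "S \<subseteq> V" "card S = 3"
        then show "\<exists>vs. is_cycle V E vs \<and> S \<subseteq> set vs \<and> rainbow (\<lambda>_. 0) vs"
          using card_mono[OF fin \<open>S \<subseteq> V\<close>] by simp
      qed
      then have "?P (card ((\<lambda>_::'a set. 0::nat) ` E))" by blast
      then have "crx 3 V E \<le> card ((\<lambda>_::'a set. 0::nat) ` E)" unfolding crx_def by (rule Least_le)
      also have "\<dots> \<le> card {0::nat}" by (intro card_mono) auto
      finally show False using crx by simp
    qed
    have key: "{x,y}\<in>E \<and> c{x,y}\<noteq>c{x,z}"
      if xyz: "x\<in>V" "y\<in>V" "z\<in>V" "x\<noteq>y" "x\<noteq>z" "y\<noteq>z" for x y z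
    proof -
      have "{x,y,z} \<subseteq> V" "card {x,y,z} = 3" using xyz by auto
      then obtain vs where vs: "is_cycle V E vs" "{x,y,z} \<subseteq> set vs" "rainbow c vs"
        using c(1) unfolding rainbow_cycle_colouring_def by blast
      have "length vs = card (cycle_edges vs)" using cycle_card[OF vs(1)] by simp
      also have "\<dots> = card (c ` cycle_edges vs)"
        using vs(3) by (simp add: rainbow_def card_image)
      also have "\<dots> \<le> card (c ` E)"
        using cycle_sub[OF vs(1)] finE by (intro card_mono) auto
      finally have "length vs = 3" using c(2) vs(1) by (simp add: is_cycle_def)
      then obtain a b d where abd: "vs = [a,b,d]" using len3 by blast
      have in3: "x \<in> {a,b,d}" "y \<in> {a,b,d}" "z \<in> {a,b,d}" using vs(2) abd by auto
      note t1 = tri_props(1)[OF vs(1)[unfolded abd] vs(3)[unfolded abd]]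
      note t2 = tri_props(2)[OF vs(1)[unfolded abd] vs(3)[unfolded abd]]
      show ?thesis using t1[rule_format, OF in3(1) in3(2) xyz(4)]
          t2[rule_format, OF in3(1) in3(2) in3(3) xyz(4) xyz(5) xyz(6)] by blast
    qed
    have comp: "\<forall>u\<in>V. \<forall>v\<in>V. u\<noteq>v \<longrightarrow> {u,v}\<in>E"
    proof (intro ballI impI)
      fix u v assume uv: "u\<in>V" "v\<in>V" "u\<noteq>v"
      have c2: "card {u,v} = 2" using uv by simp
      have "card (V - {u,v}) = card V - card {u,v}" using uv by (intro card_Diff_subset) auto
      then have "card (V - {u,v}) \<ge> 1" using V3 c2 by linarith
      then have "V - {u,v} \<noteq> {}" by (metis card.empty not_one_le_zero)
      then obtain w where "w \<in> V - {u,v}" by blast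
      then show "{u,v}\<in>E" using key[of u v w] uv by auto
    qed
    have V4: "card V \<le> 4"
    proof -
      have "V \<noteq> {}" using V3 by (metis card.empty not_numeral_le_zero)
      then obtain u where u: "u \<in> V" by blast
      have "inj_on (\<lambda>v. c{u,v}) (V - {u})"
      proof (rule inj_onI)
        fix v w assume "v \<in> V - {u}" "w \<in> V - {u}" "c{u,v} = c{u,w}"
        then show "v = w" using key[of u v w] u by auto
      qed
      then have "card (V - {u}) = card ((\<lambda>v. c{u,v}) ` (V - {u}))" by (simp add: card_image)
      also have "\<dots> \<le> card (c ` E)" using comp u finE by (intro card_mono) auto
      finally have "card (V - {u}) \<le> 3" using c(2) by simp
      then show ?thesis using u fin by (simp add: card_Diff_singleton)
    qed
    have "card V = 3 \<or> card V = 4" using V3 V4 by auto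
    then show "graph_iso V E {0..<3} (complete_edges 3) \<or> graph_iso V E {0..<4} (complete_edges 4)"
    proof
      assume "card V = 3" then show ?thesis by (rule disjI1[OF iso_complete[OF assms(1) comp]])
    next
      assume "card V = 4" then show ?thesis by (rule disjI2[OF iso_complete[OF assms(1) comp]])
    qed
  next
    assume iso: "graph_iso V E {0..<3} (complete_edges 3) \<or> graph_iso V E {0..<4} (complete_edges 4)"
    then obtain n where n: "n = 3 \<or> n = 4" "graph_iso V E {0..<n} (complete_edges n)" by blast
    note cV = iso_inv(1)[OF n(2)] and comp = iso_inv(2)[OF n(2)]
    obtain f where f: "bij_betw f V {0..<n}" using n(2) unfolding graph_iso_def by blast
    define col where "col e = col0 (f ` e)" for e
    have pr: "\<forall>u\<in>V. \<forall>v\<in>V. \<forall>w\<in>V. u\<noteq>v \<longrightarrow> u\<noteq>w \<longrightarrow> v\<noteq>w \<longrightarrow> col{u,v}\<noteq>col{u,w}"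
    proof (intro ballI impI)
      fix u v w assume V: "u\<in>V" "v\<in>V" "w\<in>V" and d: "u\<noteq>v" "u\<noteq>w" "v\<noteq>w"
      have "f u < n" "f v < n" "f w < n" "f u \<noteq> f v" "f u \<noteq> f w" "f v \<noteq> f w"
        using f V d by (auto simp: bij_betw_def inj_on_def)
      moreover have "n \<le> 4" using n(1) by auto
      ultimately have "f u < 4" "f v < 4" "f w < 4" "f u \<noteq> f v" "f u \<noteq> f w" "f v \<noteq> f w"
        by auto
      then show "col{u,v}\<noteq>col{u,w}" using col0_prop by (simp add: col_def)
    qed
    have rc: "rainbow_cycle_colouring 3 V E col" using tri_colour[OF comp pr] .
    have "3 \<le> card V" using cV n(1) by auto
    then have ge: "3 \<le> card (col ` E)" by (rule lower[OF rc finE fin])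
    have "col ` E \<subseteq> {..2}" by (auto simp: col_def intro: col0_range)
    then have "card (col ` E) \<le> card {..2::nat}" by (rule card_mono[OF finite_atMost])
    then have "card (col ` E) \<le> 3" by simp
    then have P3: "?P 3" using rc ge by (intro exI[of _ col]) auto
    show "crx 3 V E = 3" unfolding crx_def
    proof (rule Least_equality)
      show "?P 3" by (rule P3)
    next
      fix m assume "?P m"
      then obtain c where "rainbow_cycle_colouring 3 V E c" "card (c ` E) = m" by blast
      moreover have "3 \<le> card V" using cV n(1) by auto
      ultimately show "3 \<le> m" using lower[OF _ finE fin] by blast
    qed
  qed
qed

end
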